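(* Let $X_1,X_2,\dots:\Omega\to(0,1)$ be random variables such that for every Borel set $B\subset(0,1)$ of positive Lebesgue measure, $B\cap\{X_1,X_2,\dots\}\ne\emptyset$ a.s. Then the random countable set $\{X_1,X_2,\dots\}$ has a selector whose distribution is uniform on $(0,1)$. That is, there is a probability measure $P$ on $(0,1)^\infty\times(0,1)$ such that: - its first marginal is the joint law of $(X_1,X_2,\dots)$; - its second marginal is the uniform distribution on $(0,1)$; - $z\in\{x_1,x_2,\dots\}$ for $P$-almost all $((x_1,x_2,\dots),z)$.
   Context: A selector of the random countable set $\{X_1,X_2,\dots\}$ is a probability measure $P$ on $(0,1)^\infty\times(0,1)$ whose first marginal is the joint law of $(X_1,X_2,\dots)$ and such that $z\in\{x_1,x_2,\dots\}$ for $P$-almost all $(x,z)$. Its distribution is its second marginal. *)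

theory Defs
  imports "HOL-Probability.Probability"
begin

definition unit_ival :: "real measure" where
  "unit_ival = restrict_space lborel {0<..<1}"

definition seq_space :: "(nat \<Rightarrow> real) measure" where
  "seq_space = PiM UNIV (\<lambda>_. unit_ival)"

end

theory Submission
  imports Defs
begin


lemma mix_emeasure:
  fixes M :: "'a measure" and W :: "nat \<Rightarrow> 'a \<Rightarrow> ennreal"
  assumes sf: "sigma_finite_measure M"
    and Wm: "\<And>i. W i \<in> borel_measurable M"
    and fm: "f \<in> measurable (count_space UNIV \<Otimes>\<^sub>M M) N"
    and E: "E \<in> sets N"
  shows "emeasure (distr (density (count_space UNIV \<Otimes>\<^sub>M M) (\<lambda>p. W (fst p) (snd p))) N f) E
     = (\<integral>\<^sup>+\<omega>. (\<Sum>i. W i \<omega> * indicator E (f (i,\<omega>))) \<partial>M)"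
proof -
  interpret pair_sigma_finite "count_space UNIV :: nat measure" M
    by (simp add: pair_sigma_finite_def sf sigma_finite_measure_count_space)
  have Wm2: "(\<lambda>p. W (fst p) (snd p)) \<in> borel_measurable (count_space UNIV \<Otimes>\<^sub>M M)"
    by (rule measurable_pair_measure_countable1) (auto simp: Wm)
  have fm': "f \<in> measurable (density (count_space UNIV \<Otimes>\<^sub>M M) (\<lambda>p. W (fst p) (snd p))) N"
    using fm by simp
  have "emeasure (distr (density (count_space UNIV \<Otimes>\<^sub>M M) (\<lambda>p. W (fst p) (snd p))) N f) E
     = emeasure (density (count_space UNIV \<Otimes>\<^sub>M M) (\<lambda>p. W (fst p) (snd p))) (f -` E \<inter> space (count_space UNIV \<Otimes>\<^sub>M M))"
    using fm' E by (simp add: emeasure_distr)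
  also have "\<dots> = (\<integral>\<^sup>+p. W (fst p) (snd p) * indicator (f -` E \<inter> space (count_space UNIV \<Otimes>\<^sub>M M)) p \<partial>(count_space UNIV \<Otimes>\<^sub>M M))"
    using fm E Wm2 by (intro emeasure_density) auto
  also have "\<dots> = (\<integral>\<^sup>+p. W (fst p) (snd p) * indicator E (f p) \<partial>(count_space UNIV \<Otimes>\<^sub>M M))"
    by (intro nn_integral_cong) (auto simp: indicator_def)
  also have "\<dots> = (\<integral>\<^sup>+\<omega>. (\<integral>\<^sup>+i. W i \<omega> * indicator E (f (i,\<omega>)) \<partial>count_space UNIV) \<partial>M)"
    using fm E Wm2 by (subst nn_integral_snd[symmetric]) auto
  also have "\<dots> = (\<integral>\<^sup>+\<omega>. (\<Sum>i. W i \<omega> * indicator E (f (i,\<omega>))) \<partial>M)"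
    by (simp add: nn_integral_count_space_nat)
  finally show ?thesis .
qed


locale sel = prob_space M for M :: "'a measure" +
  fixes X :: "nat \<Rightarrow> 'a \<Rightarrow> real"
  assumes Xm: "\<And>i. X i \<in> measurable M unit_ival"
  and hit: "\<And>B. B \<in> sets borel \<Longrightarrow> B \<subseteq> {0<..<1} \<Longrightarrow> emeasure lborel B > 0 \<Longrightarrow>
           (AE \<omega> in M. \<exists>i. X i \<omega> \<in> B)"
begin

lemma space_U[simp]: "space unit_ival = {0<..<1}"
  unfolding unit_ival_def by (simp add: space_restrict_space)

lemma sets_U: "A \<in> sets unit_ival \<longleftrightarrow> A \<subseteq> {0<..<1} \<and> A \<in> sets borel"
  unfolding unit_ival_def by (subst sets_restrict_space_iff) auto

lemma emeasure_U: assumes "A \<in> sets unit_ival" shows "emeasure unit_ival A = emeasure lborel A"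
proof -
  have "A \<subseteq> {0<..<1}" using assms sets_U by blast
  then show ?thesis unfolding unit_ival_def by (intro emeasure_restrict_space) auto
qed

lemma prob_U: "prob_space unit_ival"
proof
  have "{0<..<1::real} \<in> sets unit_ival" by (simp add: sets_U)
  then show "emeasure unit_ival (space unit_ival) = 1"
    by (simp add: emeasure_U)
qed

lemma Xb[measurable]: "X i \<in> borel_measurable M"
proof -
  have "X i \<in> M \<rightarrow>\<^sub>M lborel"
    using Xm[of i] unfolding unit_ival_def measurable_restrict_space2_iff by blast
  then show ?thesis using measurable_cong_sets[OF refl sets_lborel, of M] by blast
qed

lemma X_in: "\<omega> \<in> space M \<Longrightarrow> X i \<omega> \<in> {0<..<1}"
  using measurable_space[OF Xm[of i]] by simp

lemma term_le_suminf: "f i \<le> (\<Sum>j. f j :: ennreal)"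
  using sum_le_suminf[of f "{i}"] by simp

lemma X_pos: "\<omega> \<in> space M \<Longrightarrow> 0 < X i \<omega>" and X_lt1: "\<omega> \<in> space M \<Longrightarrow> X i \<omega> < 1"
  using X_in[of \<omega> i] by auto

definition m where "m = distr (density (count_space UNIV \<Otimes>\<^sub>M M) (\<lambda>p. ennreal ((1/2)^Suc (fst p)))) unit_ival (\<lambda>p. X (fst p) (snd p))"

lemma sets_m[simp]: "sets m = sets unit_ival"
  unfolding m_def by simp

lemma space_m[simp]: "space m = {0<..<1}"
  unfolding m_def by simp

lemma Xpm: "(\<lambda>p. X (fst p) (snd p)) \<in> measurable (count_space UNIV \<Otimes>\<^sub>M M) unit_ival"
  by (rule measurable_pair_measure_countable1) (auto simp: Xm)

lemma m_emeasure: "C \<in> sets unit_ival \<Longrightarrow>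
   emeasure m C = (\<integral>\<^sup>+\<omega>. (\<Sum>i. ennreal ((1/2)^Suc i) * indicator C (X i \<omega>)) \<partial>M)"
  unfolding m_def
  by (subst mix_emeasure[where W="\<lambda>i \<omega>. ennreal ((1/2)^Suc i)"])
     (auto simp: Xpm sigma_finite_measure_axioms)

lemma half_sum: "(\<Sum>i. ennreal ((1/2::real)^Suc i)) = 1"
  using power_half_series by (subst suminf_ennreal2) (auto simp: sums_iff)

lemma m_prob: "prob_space m"
proof
  have "emeasure m {0<..<1} = (\<integral>\<^sup>+\<omega>. (\<Sum>i. ennreal ((1/2)^Suc i) * indicator {0<..<1} (X i \<omega>)) \<partial>M)"
    by (rule m_emeasure) (simp add: sets_U)
  also have "\<dots> = (\<integral>\<^sup>+\<omega>. (\<Sum>i. ennreal ((1/2)^Suc i)) \<partial>M)"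
    by (rule nn_integral_cong) (simp add: X_pos X_lt1)
  also have "\<dots> = 1" by (simp only: half_sum nn_integral_const emeasure_space_1 mult_1_right)
  finally show "emeasure m (space m) = 1" by simp
qed

lemma m_lower: assumes C: "C \<in> sets unit_ival"
  shows "ennreal ((1/2)^Suc i) * emeasure M (X i -` C \<inter> space M) \<le> emeasure m C"
proof -
  have XC: "X i -` C \<inter> space M \<in> sets M" using Xm C by (rule measurable_sets)
  have "ennreal ((1/2)^Suc i) * emeasure M (X i -` C \<inter> space M)
      = (\<integral>\<^sup>+\<omega>. ennreal ((1/2)^Suc i) * indicator C (X i \<omega>) \<partial>M)"
    using XC by (subst nn_integral_cmult_indicator[symmetric]) (auto intro!: nn_integral_cong simp: indicator_def)
  also have "\<dots> \<le> (\<integral>\<^sup>+\<omega>. (\<Sum>j. ennreal ((1/2)^Suc j) * indicator C (X j \<omega>)) \<partial>M)"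
  proof (intro nn_integral_mono)
    fix \<omega>
    show "ennreal ((1/2)^Suc i) * indicator C (X i \<omega>) \<le> (\<Sum>j. ennreal ((1/2)^Suc j) * indicator C (X j \<omega>))"
      by (rule term_le_suminf)
  qed
  also have "\<dots> = emeasure m C" using C by (simp add: m_emeasure)
  finally show ?thesis .
qed

lemma m_null: assumes "C \<in> null_sets m" shows "emeasure M (X i -` C \<inter> space M) = 0"
proof -
  have C: "C \<in> sets unit_ival" "emeasure m C = 0" using assms by auto
  have "ennreal ((1/2)^Suc i) * emeasure M (X i -` C \<inter> space M) = 0"
    using m_lower[OF C(1), of i] C(2) by simp
  then show ?thesis by simp
qed

lemma ac_U: "absolutely_continuous m unit_ival"
  unfolding absolutely_continuous_def
proof
  fix C assume C0: "C \<in> null_sets m"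
  have C: "C \<in> sets unit_ival" using C0 by auto
  show "C \<in> null_sets unit_ival"
  proof (rule ccontr)
    assume "C \<notin> null_sets unit_ival"
    then have "emeasure lborel C > 0" using C by (auto simp: emeasure_U zero_less_iff_neq_zero)
    then have A1: "AE \<omega> in M. \<exists>i. X i \<omega> \<in> C" using C by (intro hit) (auto simp: sets_U)
    have "AE \<omega> in M. X i \<omega> \<notin> C" for i
    proof -
      have e: "{x \<in> space M. \<not> X i x \<notin> C} = X i -` C \<inter> space M" by auto
      show ?thesis
        by (subst AE_iff_measurable[OF _ refl]) (simp_all only: e measurable_sets[OF Xm C] m_null[OF C0])
    qed
    then have "AE \<omega> in M. \<forall>i. X i \<omega> \<notin> C" by (simp add: AE_all_countable)
    with A1 have "AE \<omega> in M. False" by eventually_elim auto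
    then show False by (simp add: AE_False)
  qed
qed

end



context sel begin

lemma m_sf: "sigma_finite_measure m"
  using m_prob by (simp add: prob_space_imp_sigma_finite)

lemma m_borel_comp: "f \<in> borel_measurable m \<Longrightarrow> (\<lambda>\<omega>. f (X i \<omega>)) \<in> borel_measurable M"
proof -
  assume "f \<in> borel_measurable m"
  then have "f \<in> borel_measurable unit_ival" by (simp add: measurable_cong_sets[OF sets_m refl])
  then show ?thesis by (rule measurable_compose[OF Xm[of i]])
qed

lemma rn_real:
  assumes "finite_measure N" "absolutely_continuous m N" "sets N = sets m"
  shows "density m (\<lambda>z. ennreal (enn2real (RN_deriv m N z))) = N"
proof -
  interpret sigma_finite_measure m by (rule m_sf)
  have fin: "AE z in m. RN_deriv m N z \<noteq> \<infinity>"
    using assms by (intro RN_deriv_finite) (auto simp: finite_measure.sigma_finite_measure)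
  have "density m (\<lambda>z. ennreal (enn2real (RN_deriv m N z))) = density m (RN_deriv m N)"
    using fin by (intro density_cong) (auto simp: ennreal_enn2real_if)
  also have "\<dots> = N" using assms by (intro density_RN_deriv) auto
  finally show ?thesis .
qed

definition phi :: "real \<Rightarrow> real" where "phi z = enn2real (RN_deriv m unit_ival z)"

lemma phi_dens: "density m (\<lambda>z. ennreal (phi z)) = unit_ival"
proof -
  interpret U: prob_space unit_ival by (rule prob_U)
  show ?thesis unfolding phi_def using ac_U U.finite_measure_axioms
    by (intro rn_real) auto
qed

lemma phi_meas[measurable]: "phi \<in> borel_measurable m"
  unfolding phi_def by measurable

lemma phi_nn: "0 \<le> phi z" unfolding phi_def by simp

definition eta :: "('a \<Rightarrow> real) \<Rightarrow> nat \<Rightarrow> real measure" where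
  "eta L i = distr (density M (\<lambda>\<omega>. ennreal (L \<omega>))) unit_ival (X i)"

lemma sets_eta[simp]: "sets (eta L i) = sets unit_ival"
  unfolding eta_def by simp

lemma eta_emeasure:
  assumes L: "L \<in> borel_measurable M" and C: "C \<in> sets unit_ival"
  shows "emeasure (eta L i) C = (\<integral>\<^sup>+\<omega>. ennreal (L \<omega>) * indicator C (X i \<omega>) \<partial>M)"
proof -
  have XC: "X i -` C \<inter> space M \<in> sets M" using Xm C by (rule measurable_sets)
  have "emeasure (eta L i) C = emeasure (density M (\<lambda>\<omega>. ennreal (L \<omega>))) (X i -` C \<inter> space M)"
    unfolding eta_def using C Xm[of i] by (subst emeasure_distr) auto
  also have "\<dots> = (\<integral>\<^sup>+\<omega>. ennreal (L \<omega>) * indicator (X i -` C \<inter> space M) \<omega> \<partial>M)"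
    using L XC by (intro emeasure_density) auto
  also have "\<dots> = (\<integral>\<^sup>+\<omega>. ennreal (L \<omega>) * indicator C (X i \<omega>) \<partial>M)"
    by (intro nn_integral_cong) (auto simp: indicator_def)
  finally show ?thesis .
qed

lemma eta_le:
  assumes L: "L \<in> borel_measurable M" "\<And>\<omega>. L \<omega> \<le> 1" and C: "C \<in> sets unit_ival"
  shows "emeasure (eta L i) C \<le> emeasure M (X i -` C \<inter> space M)"
proof -
  have XC: "X i -` C \<inter> space M \<in> sets M" using Xm C by (rule measurable_sets)
  have "emeasure (eta L i) C \<le> (\<integral>\<^sup>+\<omega>. indicator (X i -` C \<inter> space M) \<omega> \<partial>M)"
    unfolding eta_emeasure[OF L(1) C]
    by (intro nn_integral_mono) (auto simp: indicator_def L(2))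
  also have "\<dots> = emeasure M (X i -` C \<inter> space M)" using XC by simp
  finally show ?thesis .
qed

lemma eta_finite:
  assumes L: "L \<in> borel_measurable M" "\<And>\<omega>. L \<omega> \<le> 1"
  shows "finite_measure (eta L i)"
proof
  have "emeasure (eta L i) (space (eta L i)) \<le> emeasure M (X i -` {0<..<1} \<inter> space M)"
    using eta_le[OF L, of "{0<..<1}" i] by (simp add: sets_U eta_def)
  also have "\<dots> \<le> 1" by (rule emeasure_le_1)
  finally show "emeasure (eta L i) (space (eta L i)) \<noteq> \<infinity>"
    by (auto simp: top_unique)
qed

lemma eta_ac:
  assumes L: "L \<in> borel_measurable M" "\<And>\<omega>. L \<omega> \<le> 1"
  shows "absolutely_continuous m (eta L i)"
  unfolding absolutely_continuous_def
proof
  fix C assume C0: "C \<in> null_sets m"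
  have C: "C \<in> sets unit_ival" using C0 by auto
  have "emeasure (eta L i) C = 0"
    using eta_le[OF L C, of i] m_null[OF C0, of i] by simp
  then show "C \<in> null_sets (eta L i)" using C by auto
qed

definition kd :: "nat \<Rightarrow> ('a \<Rightarrow> real) \<Rightarrow> real \<Rightarrow> real" where
  "kd i L z = enn2real (RN_deriv m (eta L i) z)"

lemma kd_meas[measurable]: "kd i L \<in> borel_measurable m"
  unfolding kd_def by measurable

lemma kd_nn: "0 \<le> kd i L z" unfolding kd_def by simp

lemma kd_dens:
  assumes L: "L \<in> borel_measurable M" "\<And>\<omega>. L \<omega> \<le> 1"
  shows "density m (\<lambda>z. ennreal (kd i L z)) = eta L i"
  unfolding kd_def using eta_finite[OF L] eta_ac[OF L] by (intro rn_real) auto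

lemma key_gen:
  assumes L: "L \<in> borel_measurable M" "\<And>\<omega>. L \<omega> \<le> 1" and h: "h \<in> borel_measurable m"
  shows "(\<integral>\<^sup>+\<omega>. ennreal (L \<omega>) * h (X i \<omega>) \<partial>M) = (\<integral>\<^sup>+z. ennreal (kd i L z) * h z \<partial>m)"
proof -
  have hU: "h \<in> borel_measurable unit_ival" using h by (simp add: measurable_cong_sets[OF sets_m refl])
  have "(\<integral>\<^sup>+\<omega>. ennreal (L \<omega>) * h (X i \<omega>) \<partial>M) = (\<integral>\<^sup>+\<omega>. h (X i \<omega>) \<partial>density M (\<lambda>\<omega>. ennreal (L \<omega>)))"
    using L(1) m_borel_comp[OF h, of i] by (subst nn_integral_density) auto
  also have "\<dots> = (\<integral>\<^sup>+z. h z \<partial>eta L i)"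
    unfolding eta_def using hU Xm[of i] by (subst nn_integral_distr) auto
  also have "\<dots> = (\<integral>\<^sup>+z. h z \<partial>density m (\<lambda>z. ennreal (kd i L z)))"
    by (simp add: kd_dens[OF L])
  also have "\<dots> = (\<integral>\<^sup>+z. ennreal (kd i L z) * h z \<partial>m)"
    using h by (subst nn_integral_density) auto
  finally show ?thesis .
qed

end


context sel begin

definition gf :: "real \<Rightarrow> real \<Rightarrow> real" where "gf k r = (if k \<le> r then 1 else r / k)"

lemma gf_nn: "0 \<le> k \<Longrightarrow> 0 \<le> r \<Longrightarrow> 0 \<le> gf k r"
  unfolding gf_def by auto

lemma gf_le1: "0 \<le> k \<Longrightarrow> 0 \<le> r \<Longrightarrow> gf k r \<le> 1"
  unfolding gf_def by auto

lemma gf_mult: "0 \<le> k \<Longrightarrow> 0 \<le> r \<Longrightarrow> k * gf k r = min k r"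
  unfolding gf_def by auto

fun st :: "nat \<Rightarrow> ('a \<Rightarrow> real) \<times> (real \<Rightarrow> real)" where
  "st 0 = (\<lambda>_. 1, phi)"
| "st (Suc i) = (let L = fst (st i); r = snd (st i); k = kd i L in
     (\<lambda>\<omega>. L \<omega> * (1 - gf (k (X i \<omega>)) (r (X i \<omega>))), \<lambda>z. r z - min (k z) (r z)))"

definition "Lf i = fst (st i)"
definition "rf i = snd (st i)"
definition "kf i = kd i (Lf i)"
definition "w i \<omega> = Lf i \<omega> * gf (kf i (X i \<omega>)) (rf i (X i \<omega>))"

lemma Lf_0: "Lf 0 \<omega> = 1" by (simp add: Lf_def)
lemma rf_0: "rf 0 = phi" by (simp add: rf_def)
lemma Lf_Suc: "Lf (Suc i) \<omega> = Lf i \<omega> * (1 - gf (kf i (X i \<omega>)) (rf i (X i \<omega>)))"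
  by (simp add: Lf_def rf_def kf_def Let_def)
lemma rf_Suc: "rf (Suc i) z = rf i z - min (kf i z) (rf i z)"
  by (simp add: Lf_def rf_def kf_def Let_def)

lemma kf_nn: "0 \<le> kf i z" by (simp add: kf_def kd_nn)

lemma rf_nn: "0 \<le> rf i z"
  by (induction i) (auto simp: rf_0 phi_nn rf_Suc)

lemma Lf_bounds: "0 \<le> Lf i \<omega> \<and> Lf i \<omega> \<le> 1"
proof (induction i)
  case 0 then show ?case by (simp add: Lf_0)
next
  case (Suc i)
  let ?g = "gf (kf i (X i \<omega>)) (rf i (X i \<omega>))"
  have g: "0 \<le> ?g" "?g \<le> 1" using gf_nn gf_le1 kf_nn rf_nn by auto
  have "0 \<le> Lf i \<omega> * (1 - ?g)" using Suc g by simp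
  moreover have "Lf i \<omega> * (1 - ?g) \<le> 1 * 1" using Suc g by (intro mult_mono) auto
  ultimately show ?case by (simp add: Lf_Suc)
qed

lemma Lf_le1: "Lf i \<omega> \<le> 1" using Lf_bounds by blast
lemma Lf_nn: "0 \<le> Lf i \<omega>" using Lf_bounds by blast

lemma meas_both: "Lf i \<in> borel_measurable M \<and> rf i \<in> borel_measurable m"
proof (induction i)
  case 0
  have "Lf 0 = (\<lambda>_. 1)" by (simp add: fun_eq_iff Lf_0)
  then show ?case by (simp add: rf_0)
next
  case (Suc i)
  then have [measurable]: "Lf i \<in> borel_measurable M" "rf i \<in> borel_measurable m" by auto
  have [measurable]: "kf i \<in> borel_measurable m" unfolding kf_def by measurable
  have g: "(\<lambda>z. gf (kf i z) (rf i z)) \<in> borel_measurable m" unfolding gf_def by measurable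
  have "(\<lambda>\<omega>. gf (kf i (X i \<omega>)) (rf i (X i \<omega>))) \<in> borel_measurable M"
    by (rule m_borel_comp[OF g])
  then have "(\<lambda>\<omega>. Lf i \<omega> * (1 - gf (kf i (X i \<omega>)) (rf i (X i \<omega>)))) \<in> borel_measurable M"
    by measurable
  moreover have "(\<lambda>z. rf i z - min (kf i z) (rf i z)) \<in> borel_measurable m" by measurable
  ultimately show ?case
    by (simp add: Lf_Suc[abs_def] rf_Suc[abs_def])
qed

lemma Lf_meas[measurable]: "Lf i \<in> borel_measurable M" using meas_both by blast
lemma rf_meas[measurable]: "rf i \<in> borel_measurable m" using meas_both by blast
lemma kf_meas[measurable]: "kf i \<in> borel_measurable m" unfolding kf_def by measurable

lemma gfz_meas[measurable]: "(\<lambda>z. gf (kf i z) (rf i z)) \<in> borel_measurable m"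
  unfolding gf_def by measurable

lemma w_meas[measurable]: "w i \<in> borel_measurable M"
proof -
  have "(\<lambda>\<omega>. gf (kf i (X i \<omega>)) (rf i (X i \<omega>))) \<in> borel_measurable M"
    by (rule m_borel_comp[OF gfz_meas])
  then show ?thesis unfolding w_def[abs_def] by measurable
qed

lemma w_nn: "0 \<le> w i \<omega>"
  unfolding w_def using Lf_nn gf_nn kf_nn rf_nn by simp

lemma Lf_Suc_w: "Lf (Suc i) \<omega> = Lf i \<omega> - w i \<omega>"
  by (simp add: Lf_Suc w_def algebra_simps)

lemma sum_w: "(\<Sum>i<n. w i \<omega>) = 1 - Lf n \<omega>"
  by (induction n) (auto simp: Lf_0 Lf_Suc_w)

lemma sum_min: "(\<Sum>i<n. min (kf i z) (rf i z)) = phi z - rf n z"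
  by (induction n) (auto simp: rf_0 rf_Suc)

lemma key:
  assumes C: "C \<in> sets unit_ival"
  shows "(\<integral>\<^sup>+\<omega>. ennreal (w i \<omega>) * indicator C (X i \<omega>) \<partial>M)
       = (\<integral>\<^sup>+z. ennreal (min (kf i z) (rf i z)) * indicator C z \<partial>m)"
proof -
  have Cm: "C \<in> sets m" using C by simp
  have h: "(\<lambda>z. ennreal (gf (kf i z) (rf i z)) * indicator C z) \<in> borel_measurable m"
    using Cm by measurable
  have "(\<integral>\<^sup>+\<omega>. ennreal (w i \<omega>) * indicator C (X i \<omega>) \<partial>M)
      = (\<integral>\<^sup>+\<omega>. ennreal (Lf i \<omega>) * (ennreal (gf (kf i (X i \<omega>)) (rf i (X i \<omega>))) * indicator C (X i \<omega>)) \<partial>M)"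
    unfolding w_def using Lf_nn gf_nn kf_nn rf_nn
    by (intro nn_integral_cong) (simp add: ennreal_mult mult.assoc)
  also have "\<dots> = (\<integral>\<^sup>+z. ennreal (kd i (Lf i) z) * (ennreal (gf (kf i z) (rf i z)) * indicator C z) \<partial>m)"
    by (rule key_gen[OF Lf_meas Lf_le1 h])
  also have "\<dots> = (\<integral>\<^sup>+z. ennreal (min (kf i z) (rf i z)) * indicator C z \<partial>m)"
  proof (intro nn_integral_cong)
    fix z
    have "ennreal (kf i z) * ennreal (gf (kf i z) (rf i z)) = ennreal (min (kf i z) (rf i z))"
      using kf_nn rf_nn gf_nn by (simp add: ennreal_mult[symmetric] gf_mult)
    then show "ennreal (kd i (Lf i) z) * (ennreal (gf (kf i z) (rf i z)) * indicator C z)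
      = ennreal (min (kf i z) (rf i z)) * indicator C z"
      by (simp add: kf_def mult.assoc[symmetric])
  qed
  finally show ?thesis .
qed

end


context sel begin

definition "S \<omega> = (\<Sum>i. ennreal (w i \<omega>))"
definition "T z = (\<Sum>i. ennreal (min (kf i z) (rf i z)))"

lemma S_meas[measurable]: "S \<in> borel_measurable M"
  unfolding S_def by measurable

lemma T_meas[measurable]: "T \<in> borel_measurable m"
  unfolding T_def by measurable

lemma S_le1: "S \<omega> \<le> 1"
  unfolding S_def suminf_eq_SUP
proof (intro SUP_least)
  fix n
  have "(\<Sum>i<n. ennreal (w i \<omega>)) = ennreal (1 - Lf n \<omega>)"
    using w_nn by (simp add: sum_w)
  also have "\<dots> \<le> 1" using Lf_nn[of n \<omega>] by simp
  finally show "(\<Sum>i<n. ennreal (w i \<omega>)) \<le> 1" .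
qed

lemma S_ge: assumes "Lf n \<omega> = 0" shows "1 \<le> S \<omega>"
proof -
  have "(\<Sum>i<n. ennreal (w i \<omega>)) = ennreal (1 - Lf n \<omega>)"
    using w_nn by (simp add: sum_w)
  then have "(\<Sum>i<n. ennreal (w i \<omega>)) = 1" using assms by simp
  moreover have "(\<Sum>i<n. ennreal (w i \<omega>)) \<le> S \<omega>"
    unfolding S_def by (rule sum_le_suminf) auto
  ultimately show ?thesis by simp
qed

lemma T_le: "T z \<le> ennreal (phi z)"
  unfolding T_def suminf_eq_SUP
proof (intro SUP_least)
  fix n
  have "(\<Sum>i<n. ennreal (min (kf i z) (rf i z))) = ennreal (phi z - rf n z)"
    using kf_nn rf_nn by (simp add: sum_min)
  also have "\<dots> \<le> ennreal (phi z)" using rf_nn[of n z] by (intro ennreal_leI) simp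
  finally show "(\<Sum>i<n. ennreal (min (kf i z) (rf i z))) \<le> ennreal (phi z)" .
qed

lemma T_ge: assumes "rf n z = 0" shows "ennreal (phi z) \<le> T z"
proof -
  have "(\<Sum>i<n. ennreal (min (kf i z) (rf i z))) = ennreal (phi z - rf n z)"
    using kf_nn rf_nn by (simp add: sum_min)
  then have "(\<Sum>i<n. ennreal (min (kf i z) (rf i z))) = ennreal (phi z)" using assms by simp
  moreover have "(\<Sum>i<n. ennreal (min (kf i z) (rf i z))) \<le> T z"
    unfolding T_def by (rule sum_le_suminf) auto
  ultimately show ?thesis by simp
qed

lemma ind_meas[measurable]: "C \<in> sets unit_ival \<Longrightarrow> (\<lambda>\<omega>. indicator C (X i \<omega>) :: ennreal) \<in> borel_measurable M"
  by (rule m_borel_comp) (rule borel_measurable_indicator, simp)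

lemma nu:
  assumes C: "C \<in> sets unit_ival"
  shows "(\<integral>\<^sup>+\<omega>. (\<Sum>i. ennreal (w i \<omega>) * indicator C (X i \<omega>)) \<partial>M) = (\<integral>\<^sup>+z. T z * indicator C z \<partial>m)"
proof -
  have Cm[measurable]: "C \<in> sets m" using C by simp
  have "(\<integral>\<^sup>+\<omega>. (\<Sum>i. ennreal (w i \<omega>) * indicator C (X i \<omega>)) \<partial>M)
     = (\<Sum>i. \<integral>\<^sup>+\<omega>. ennreal (w i \<omega>) * indicator C (X i \<omega>) \<partial>M)"
    using C by (intro nn_integral_suminf) measurable
  also have "\<dots> = (\<Sum>i. \<integral>\<^sup>+z. ennreal (min (kf i z) (rf i z)) * indicator C z \<partial>m)"
    using key[OF C] by simp
  also have "\<dots> = (\<integral>\<^sup>+z. (\<Sum>i. ennreal (min (kf i z) (rf i z)) * indicator C z) \<partial>m)"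
    using Cm by (intro nn_integral_suminf[symmetric]) measurable
  also have "\<dots> = (\<integral>\<^sup>+z. T z * indicator C z \<partial>m)"
    unfolding T_def by simp
  finally show ?thesis .
qed

definition "Bp = {z \<in> {0<..<1}. T z < ennreal (phi z)}"

lemma Bp_sets: "Bp \<in> sets unit_ival"
proof -
  have "{z \<in> space m. T z < ennreal (phi z)} \<in> sets m" by measurable
  then show ?thesis unfolding Bp_def by simp
qed

lemma pointwise:
  assumes "X i \<omega> \<in> Bp" shows "S \<omega> = 1"
proof (cases "kf i (X i \<omega>) \<le> rf i (X i \<omega>)")
  case True
  then have "Lf (Suc i) \<omega> = 0" by (simp add: Lf_Suc gf_def)
  then show ?thesis using S_ge S_le1 by (metis order_antisym)
next
  case False
  then have "rf (Suc i) (X i \<omega>) = 0" by (simp add: rf_Suc)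
  then have "ennreal (phi (X i \<omega>)) \<le> T (X i \<omega>)" by (rule T_ge)
  with assms show ?thesis unfolding Bp_def by auto
qed

lemma U_phi: "C \<in> sets unit_ival \<Longrightarrow> emeasure unit_ival C = (\<integral>\<^sup>+z. ennreal (phi z) * indicator C z \<partial>m)"
  by (subst phi_dens[symmetric]) (simp add: emeasure_density)

lemma int_phi: "(\<integral>\<^sup>+z. ennreal (phi z) \<partial>m) = 1"
proof -
  interpret U: prob_space unit_ival by (rule prob_U)
  have "1 = emeasure unit_ival {0<..<1}" using U.emeasure_space_1 by simp
  also have "\<dots> = (\<integral>\<^sup>+z. ennreal (phi z) * indicator {0<..<1} z \<partial>m)"
    by (rule U_phi) (simp add: sets_U)
  also have "\<dots> = (\<integral>\<^sup>+z. ennreal (phi z) \<partial>m)"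
    by (intro nn_integral_cong) simp
  finally show ?thesis by simp
qed

lemma int_S_T: "(\<integral>\<^sup>+\<omega>. S \<omega> \<partial>M) = (\<integral>\<^sup>+z. T z \<partial>m)"
proof -
  have "(\<integral>\<^sup>+\<omega>. S \<omega> \<partial>M) = (\<integral>\<^sup>+\<omega>. (\<Sum>i. ennreal (w i \<omega>) * indicator {0<..<1} (X i \<omega>)) \<partial>M)"
    unfolding S_def by (intro nn_integral_cong) (simp add: X_pos X_lt1)
  also have "\<dots> = (\<integral>\<^sup>+z. T z * indicator {0<..<1} z \<partial>m)"
    by (rule nu) (simp add: sets_U)
  also have "\<dots> = (\<integral>\<^sup>+z. T z \<partial>m)"
    by (intro nn_integral_cong) simp
  finally show ?thesis .
qed

lemma AE_Bp: assumes "AE z in m. z \<notin> Bp" shows "emeasure m Bp = 0"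
proof -
  have Bpm: "Bp \<in> sets m" using Bp_sets by simp
  have e: "{z \<in> space m. \<not> z \<notin> Bp} = Bp" using sets.sets_into_space[OF Bpm] by auto
  show ?thesis using assms AE_iff_measurable[OF Bpm e] by simp
qed

lemma Bp_null: "emeasure m Bp = 0"
proof (cases "emeasure lborel Bp = 0")
  case True
  have [measurable]: "Bp \<in> sets m" using Bp_sets by simp
  from True have "emeasure unit_ival Bp = 0" using Bp_sets by (simp add: emeasure_U)
  then have "(\<integral>\<^sup>+z. ennreal (phi z) * indicator Bp z \<partial>m) = 0" using U_phi[OF Bp_sets] by simp
  then have "AE z in m. ennreal (phi z) * indicator Bp z = 0"
    using Bp_sets by (subst nn_integral_0_iff_AE[symmetric]) auto
  then have "AE z in m. z \<notin> Bp"
  proof (rule AE_mp, intro AE_I2 impI)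
    fix z assume "ennreal (phi z) * indicator Bp z = 0"
    then show "z \<notin> Bp" unfolding Bp_def by (auto simp: indicator_def)
  qed
  then show ?thesis by (rule AE_Bp)
next
  case False
  then have "emeasure lborel Bp > 0" by (simp add: zero_less_iff_neq_zero)
  then have "AE \<omega> in M. \<exists>i. X i \<omega> \<in> Bp"
    using Bp_sets by (intro hit) (auto simp: sets_U)
  then have "AE \<omega> in M. S \<omega> = 1" by (rule AE_mp) (auto intro!: AE_I2 elim: pointwise)
  then have "(\<integral>\<^sup>+\<omega>. S \<omega> \<partial>M) = (\<integral>\<^sup>+\<omega>. 1 \<partial>M)" by (rule nn_integral_cong_AE)
  then have iT: "(\<integral>\<^sup>+z. T z \<partial>m) = 1" by (simp add: int_S_T emeasure_space_1)
  have "(\<integral>\<^sup>+z. ennreal (phi z) - T z \<partial>m) = (\<integral>\<^sup>+z. ennreal (phi z) \<partial>m) - (\<integral>\<^sup>+z. T z \<partial>m)"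
    using iT T_le by (intro nn_integral_diff) auto
  also have "\<dots> = 0" by (simp add: iT int_phi)
  finally have "AE z in m. ennreal (phi z) - T z = 0"
    by (subst nn_integral_0_iff_AE[symmetric]) auto
  then have "AE z in m. z \<notin> Bp"
    by (rule AE_mp) (auto intro!: AE_I2 simp: Bp_def diff_eq_0_iff_ennreal)
  then show ?thesis by (rule AE_Bp)
qed

end


context sel begin

lemma T_ae: "AE z in m. T z = ennreal (phi z)"
proof -
  have Bpm: "Bp \<in> sets m" using Bp_sets by simp
  have e: "{z \<in> space m. \<not> z \<notin> Bp} = Bp" using sets.sets_into_space[OF Bpm] by auto
  have "AE z in m. z \<notin> Bp" using Bp_null AE_iff_measurable[OF Bpm e] by simp
  then show ?thesis
    by (rule AE_mp) (auto intro!: AE_I2 simp: Bp_def intro: antisym T_le)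
qed

lemma nu_U:
  assumes C: "C \<in> sets unit_ival"
  shows "(\<integral>\<^sup>+\<omega>. (\<Sum>i. ennreal (w i \<omega>) * indicator C (X i \<omega>)) \<partial>M) = emeasure unit_ival C"
proof -
  have "(\<integral>\<^sup>+\<omega>. (\<Sum>i. ennreal (w i \<omega>) * indicator C (X i \<omega>)) \<partial>M) = (\<integral>\<^sup>+z. T z * indicator C z \<partial>m)"
    by (rule nu[OF C])
  also have "\<dots> = (\<integral>\<^sup>+z. ennreal (phi z) * indicator C z \<partial>m)"
    using T_ae by (intro nn_integral_cong_AE) auto
  also have "\<dots> = emeasure unit_ival C" by (rule U_phi[OF C, symmetric])
  finally show ?thesis .
qed

lemma S_ae: "AE \<omega> in M. S \<omega> = 1"
proof -
  have iS: "(\<integral>\<^sup>+\<omega>. S \<omega> \<partial>M) = 1"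
  proof -
    have "(\<integral>\<^sup>+\<omega>. S \<omega> \<partial>M) = (\<integral>\<^sup>+z. T z \<partial>m)" by (rule int_S_T)
    also have "\<dots> = (\<integral>\<^sup>+z. ennreal (phi z) \<partial>m)" using T_ae by (intro nn_integral_cong_AE) auto
    also have "\<dots> = 1" by (rule int_phi)
    finally show ?thesis .
  qed
  have "(\<integral>\<^sup>+\<omega>. 1 - S \<omega> \<partial>M) = (\<integral>\<^sup>+\<omega>. 1 \<partial>M) - (\<integral>\<^sup>+\<omega>. S \<omega> \<partial>M)"
    using iS S_le1 by (intro nn_integral_diff) auto
  also have "\<dots> = 0" by (simp add: iS emeasure_space_1)
  finally have "AE \<omega> in M. 1 - S \<omega> = 0"
    by (subst nn_integral_0_iff_AE[symmetric]) auto
  then show ?thesis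
    by (rule AE_mp) (auto intro!: AE_I2 simp: diff_eq_0_iff_ennreal intro: antisym S_le1)
qed

definition "Xs \<omega> = (\<lambda>j. X j \<omega>)"

lemma Xs_meas: "Xs \<in> measurable M seq_space"
  unfolding seq_space_def Xs_def
  by (rule measurable_PiM_single') (auto simp: Xm dest: measurable_space[OF Xm])

lemma Xs_meas': "(\<lambda>p. Xs (snd p)) \<in> measurable (count_space (UNIV::nat set) \<Otimes>\<^sub>M M) seq_space"
  by (rule measurable_pair_measure_countable1) (simp_all add: Xs_meas)

lemma fP: "(\<lambda>p. (Xs (snd p), X (fst p) (snd p))) \<in> measurable (count_space UNIV \<Otimes>\<^sub>M M) (seq_space \<Otimes>\<^sub>M unit_ival)"
  by (rule measurable_pair_measure_countable1) (simp_all add: measurable_Pair Xs_meas Xm)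

definition "Q = density (count_space UNIV \<Otimes>\<^sub>M M) (\<lambda>p. ennreal (w (fst p) (snd p)))"

definition "P = distr Q (seq_space \<Otimes>\<^sub>M unit_ival) (\<lambda>p. (Xs (snd p), X (fst p) (snd p)))"

lemma meas_Q: "measurable Q N = measurable (count_space UNIV \<Otimes>\<^sub>M M) N"
  unfolding Q_def by (rule measurable_cong_sets) simp_all

lemma Q_emeasure:
  assumes "f \<in> measurable (count_space UNIV \<Otimes>\<^sub>M M) N" "E \<in> sets N"
  shows "emeasure (distr Q N f) E = (\<integral>\<^sup>+\<omega>. (\<Sum>i. ennreal (w i \<omega>) * indicator E (f (i,\<omega>))) \<partial>M)"
  unfolding Q_def
  using mix_emeasure[where W="\<lambda>i \<omega>. ennreal (w i \<omega>)", OF sigma_finite_measure_axioms _ assms]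
  by simp

lemma P_space: "space P = space seq_space \<times> {0<..<1}"
  unfolding P_def by (simp add: space_pair_measure)

lemma P_prob: "prob_space P"
proof
  have "emeasure P (space P) = emeasure P (space (seq_space \<Otimes>\<^sub>M unit_ival))" by (simp add: P_def)
  also have "\<dots> = (\<integral>\<^sup>+\<omega>. (\<Sum>i. ennreal (w i \<omega>) * indicator (space (seq_space \<Otimes>\<^sub>M unit_ival)) (Xs \<omega>, X i \<omega>)) \<partial>M)"
    unfolding P_def using Q_emeasure[OF fP sets.top] by simp
  also have "\<dots> = (\<integral>\<^sup>+\<omega>. S \<omega> \<partial>M)"
    unfolding S_def
  proof (intro nn_integral_cong)
    fix \<omega> assume "\<omega> \<in> space M"
    then have "(Xs \<omega>, X i \<omega>) \<in> space (seq_space \<Otimes>\<^sub>M unit_ival)" for i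
      using measurable_space[OF fP, of "(i,\<omega>)"] by (simp add: space_pair_measure)
    then show "(\<Sum>i. ennreal (w i \<omega>) * indicator (space (seq_space \<Otimes>\<^sub>M unit_ival)) (Xs \<omega>, X i \<omega>)) = (\<Sum>i. ennreal (w i \<omega>))"
      by simp
  qed
  also have "\<dots> = (\<integral>\<^sup>+\<omega>. 1 \<partial>M)" using S_ae by (intro nn_integral_cong_AE) auto
  finally show "emeasure P (space P) = 1" by (simp add: emeasure_space_1)
qed

lemma P_sets: "sets P = sets (seq_space \<Otimes>\<^sub>M unit_ival)"
  unfolding P_def by simp

lemma P_fst: "distr P seq_space fst = distr M seq_space Xs"
proof -
  have "distr P seq_space fst = distr Q seq_space (\<lambda>p. Xs (snd p))"
    unfolding P_def using fP by (subst distr_distr) (auto simp: comp_def meas_Q)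
  also have "\<dots> = distr M seq_space Xs"
  proof (rule measure_eqI)
    show "sets (distr Q seq_space (\<lambda>p. Xs (snd p))) = sets (distr M seq_space Xs)" by simp
  next
    fix A assume "A \<in> sets (distr Q seq_space (\<lambda>p. Xs (snd p)))"
    then have A: "A \<in> sets seq_space" by simp
    have "emeasure (distr Q seq_space (\<lambda>p. Xs (snd p))) A
        = (\<integral>\<^sup>+\<omega>. (\<Sum>i. ennreal (w i \<omega>) * indicator A (Xs \<omega>)) \<partial>M)"
      using Q_emeasure[OF Xs_meas' A] by simp
    also have "\<dots> = (\<integral>\<^sup>+\<omega>. S \<omega> * indicator A (Xs \<omega>) \<partial>M)"
      unfolding S_def by simp
    also have "\<dots> = (\<integral>\<^sup>+\<omega>. indicator (Xs -` A \<inter> space M) \<omega> \<partial>M)"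
      using S_ae by (intro nn_integral_cong_AE) (auto simp: indicator_def)
    also have "\<dots> = emeasure M (Xs -` A \<inter> space M)"
      using measurable_sets[OF Xs_meas A] by simp
    also have "\<dots> = emeasure (distr M seq_space Xs) A"
      using Xs_meas A by (simp add: emeasure_distr)
    finally show "emeasure (distr Q seq_space (\<lambda>p. Xs (snd p))) A = emeasure (distr M seq_space Xs) A" .
  qed
  finally show ?thesis .
qed

lemma P_snd: "distr P unit_ival snd = unit_ival"
proof -
  have "distr P unit_ival snd = distr Q unit_ival (\<lambda>p. X (fst p) (snd p))"
    unfolding P_def using fP by (subst distr_distr) (auto simp: comp_def meas_Q)
  also have "\<dots> = unit_ival"
  proof (rule measure_eqI)
    show "sets (distr Q unit_ival (\<lambda>p. X (fst p) (snd p))) = sets unit_ival" by simp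
  next
    fix C assume "C \<in> sets (distr Q unit_ival (\<lambda>p. X (fst p) (snd p)))"
    then have C: "C \<in> sets unit_ival" by simp
    show "emeasure (distr Q unit_ival (\<lambda>p. X (fst p) (snd p))) C = emeasure unit_ival C"
      using Q_emeasure[OF Xpm C] nu_U[OF C] by simp
  qed
  finally show ?thesis .
qed

lemma U_borel: "f \<in> measurable N unit_ival \<Longrightarrow> f \<in> borel_measurable N"
proof -
  assume "f \<in> measurable N unit_ival"
  then have "f \<in> N \<rightarrow>\<^sub>M lborel"
    unfolding unit_ival_def measurable_restrict_space2_iff by blast
  then show ?thesis using measurable_cong_sets[OF refl sets_lborel, of N] by blast
qed

lemma P_AE: "AE p in P. snd p \<in> range (fst p)"
proof -
  have "{p \<in> space (seq_space \<Otimes>\<^sub>M unit_ival). snd p \<in> range (fst p)}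
      = (\<Union>j. {p \<in> space (seq_space \<Otimes>\<^sub>M unit_ival). snd p = fst p j})" by auto
  also have "\<dots> \<in> sets (seq_space \<Otimes>\<^sub>M unit_ival)"
  proof -
    have Ej: "{p \<in> space (seq_space \<Otimes>\<^sub>M unit_ival). snd p = fst p j} \<in> sets (seq_space \<Otimes>\<^sub>M unit_ival)" for j
    proof -
    have "(\<lambda>p. fst p j) \<in> measurable (seq_space \<Otimes>\<^sub>M unit_ival) unit_ival"
      unfolding seq_space_def by measurable
    then have [measurable]: "(\<lambda>p. fst p j) \<in> borel_measurable (seq_space \<Otimes>\<^sub>M unit_ival)"
      by (rule U_borel)
    have "(\<lambda>p. snd p) \<in> measurable (seq_space \<Otimes>\<^sub>M unit_ival) unit_ival"
      by measurable
    then have [measurable]: "(\<lambda>p. snd p) \<in> borel_measurable (seq_space \<Otimes>\<^sub>M unit_ival)"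
      by (rule U_borel)
    show "{p \<in> space (seq_space \<Otimes>\<^sub>M unit_ival). snd p = fst p j} \<in> sets (seq_space \<Otimes>\<^sub>M unit_ival)"
      by measurable
    qed
    show ?thesis using Ej by (intro sets.countable_UN'') auto
  qed
  finally have sets: "{p \<in> space (seq_space \<Otimes>\<^sub>M unit_ival). snd p \<in> range (fst p)} \<in> sets (seq_space \<Otimes>\<^sub>M unit_ival)" .
  show ?thesis
    unfolding P_def using fP sets
    by (subst AE_distr_iff) (auto simp: meas_Q Q_def AE_density intro!: AE_I2 simp: Xs_def)
qed

end

theorem lemma3p7:
  fixes M :: "'a measure" and X :: "nat \<Rightarrow> 'a \<Rightarrow> real"
  assumes "prob_space M"
    and "\<And>i. X i \<in> measurable M unit_ival"
    and "\<And>B. B \<in> sets borel \<Longrightarrow> B \<subseteq> {0<..<1} \<Longrightarrow> emeasure lborel B > 0 \<Longrightarrow>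
           (AE \<omega> in M. \<exists>i. X i \<omega> \<in> B)"
  shows "\<exists>P :: ((nat \<Rightarrow> real) \<times> real) measure.
           prob_space P \<and>
           sets P = sets (seq_space \<Otimes>\<^sub>M unit_ival) \<and>
           distr P seq_space fst = distr M seq_space (\<lambda>\<omega> i. X i \<omega>) \<and>
           distr P unit_ival snd = unit_ival \<and>
           (AE p in P. snd p \<in> range (fst p))"
proof -
  interpret sel M X using assms by (simp add: sel_def sel_axioms_def)
  show ?thesis
    using P_prob P_sets P_fst P_snd P_AE by (intro exI[of _ P]) (simp add: Xs_def[abs_def])
qed


end
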